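(* Let $q\in(0,1]$, $\eta\in(0,1]$ and $m>0$. Suppose that $\sup_{T\in\mathbb T}E[|\hat u_T|^m]<\infty$ where $\hat u_T=a_T^{-1}(\hat\theta_T-\theta^* )$, and assume [A5]: there exists $\lambda>0$ with $\lim_{x\to0}p(x)/|x|^q=\lambda$. Then for every $R>0$ and $m_0>0$ there exists a constant $D_{m,m_0,R}>0$ such that $$P\bigl(\hat\theta_T^{(0)}\ne0\bigr)<D_{m,m_0,R}\bigl(\|a_T\|^{m\eta}+c_T(m_0,R)\bigr)$$ for every $T\in\mathbb T$.
   Context: Let $\Theta\subset\mathbb R^{\mathsf p}$ be a bounded open set with closure $\overline\Theta$ and $\theta^*\in\Theta$. Let $(\Omega,\mathcal F,P)$ be a probability space, $\mathbb T\subset\mathbb R_{\ge0}$ with $\sup\mathbb T=\infty$. For each $T\in\mathbb T$, $\mathbb H_T:\Omega\times\overline\Theta\to\mathbb R$ is a random field continuous in $\theta$ for every $\omega$. The penalty is $p_T(\theta)=\sum_{j=1}^{\mathsf p}\xi_T^jp(\theta_j)$ with (possibly random) $\xi_T^j>0$ and $p:\mathbb R\to\mathbb R_{\ge0}$, $p(0)=0$; $\mathbb H^\dagger_T=\mathbb H_T-p_T$, and $\hat\theta_T:\Omega\to\overline\Theta$ is measurable with $\mathbb H^\dagger_T(\hat\theta_T)=\max_{\overline\Theta}\mathbb H^\dagger_T$. $\mathcal J^{(0)}=\{j:\theta^*_j=0\}$, $\mathcal J^{(1)}=\{j:\theta^*_j\ne0\}$; $x^{(0)}=(x_j)_{j\in\mathcal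 J^{(0)}}$, $A^{(00)}=(A_{ij})_{i,j\in\mathcal J^{(0)}}$. $a_T=\mathrm{diag}(\alpha_T^1,\dots,\alpha_T^{\mathsf p})$ is deterministic, invertible, with $\|a_T\|\to0$ ($\|\cdot\|$ spectral norm); $\mathbb U_T=\{u:\theta^*+a_Tu\in\overline\Theta\}$. $\tilde a_T$ is diagonal with $(\tilde a_T)_{jj}=(\xi_T^j)^{-1/q}$ for $j\in\mathcal J^{(0)}$ and $\alpha_T^j$ for $j\in\mathcal J^{(1)}$; $G_T=a_T^{-1}\tilde a_T$. For $R>0$ let $\mathsf c_{T,R}=\sup\frac{|\mathbb H_T(\theta^*+a_Tu)-\mathbb H_T(\theta^*+a_Tv)|}{|u-v|^q}$, the supremum over $u,v\in\mathbb U_T$ with $u\ne v$ and $|a_Tu|,|a_Tv|<R\|a_T\|^{1-\eta}$, and for $m_0>0$ let $c_T(m_0,R)=E[|\mathsf c_{T,R}|^{m_0}\|G_T^{(00)}\|^{qm_0}]$ (set to $\infty$ if infinite). *)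

theory Defs
  imports "HOL-Probability.Probability"
begin

definition diagm :: "('p::finite \<Rightarrow> real) \<Rightarrow> real^'p \<Rightarrow> real^'p" where
  "diagm d u = (\<chi> j. d j * u $ j)"

definition dnorm :: "('p::finite \<Rightarrow> real) \<Rightarrow> real" where
  "dnorm d = onorm (diagm d)"

definition ennpow :: "ennreal \<Rightarrow> real \<Rightarrow> ennreal" where
  "ennpow x r = (if x = \<infinity> then \<infinity> else ennreal (enn2real x powr r))"

text \<open>The random Hoelder-type constant c_{T,R}(omega), valued in [0,\<infinity>]
  (H is the random field at fixed T and omega, alpha the diagonal of a_T).\<close>
definition cTR :: "(real^'p::finite \<Rightarrow> real) \<Rightarrow> (real^'p) set \<Rightarrow> real^'p \<Rightarrow> ('p \<Rightarrow> real)
    \<Rightarrow> real \<Rightarrow> real \<Rightarrow> real \<Rightarrow> ennreal" where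
  "cTR H Th ths alpha q eta R =
     (SUP uv \<in> {(u, v). u \<noteq> v \<and> ths + diagm alpha u \<in> closure Th \<and> ths + diagm alpha v \<in> closure Th
                 \<and> norm (diagm alpha u) < R * dnorm alpha powr (1 - eta)
                 \<and> norm (diagm alpha v) < R * dnorm alpha powr (1 - eta)}.
        ennreal (\<bar>H (ths + diagm alpha (fst uv)) - H (ths + diagm alpha (snd uv))\<bar>
                 / norm (fst uv - snd uv) powr q))"

text \<open>Spectral norm of the principal submatrix G_T^{(00)} of G_T = a_T^{-1} tilde a_T
  (indices j with ths_j = 0); realised as the operator norm of that block padded by zeros.\<close>
definition G00norm :: "real^'p::finite \<Rightarrow> ('p \<Rightarrow> real) \<Rightarrow> ('p \<Rightarrow> real) \<Rightarrow> real \<Rightarrow> real" where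
  "G00norm ths alpha xi q =
     dnorm (\<lambda>j. if ths $ j = 0 then xi j powr (- 1 / q) / alpha j else 0)"

definition cT :: "'w measure \<Rightarrow> ('w \<Rightarrow> real^'p::finite \<Rightarrow> real) \<Rightarrow> (real^'p) set \<Rightarrow> real^'p
    \<Rightarrow> ('p \<Rightarrow> real) \<Rightarrow> ('w \<Rightarrow> 'p \<Rightarrow> real) \<Rightarrow> real \<Rightarrow> real \<Rightarrow> real \<Rightarrow> real \<Rightarrow> ennreal" where
  "cT M H Th ths alpha xi q eta m0 R =
     (\<integral>\<^sup>+ \<omega>. ennpow (cTR (H \<omega>) Th ths alpha q eta R) m0
              * ennreal (G00norm ths alpha (xi \<omega>) q powr (q * m0)) \<partial>M)"

end

theory Submission
  imports Defs
begin
lemma diagm_bl: "bounded_linear (diagm d)"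
proof -
  have "linear (diagm d)" by (simp add: linear_iff diagm_def vec_eq_iff algebra_simps)
  then show ?thesis using linear_conv_bounded_linear by blast
qed

lemma diagm_norm: "norm (diagm d u) \<le> dnorm d * norm u"
  unfolding dnorm_def by (rule onorm[OF diagm_bl])

lemma dnorm_ge: "\<bar>d j\<bar> \<le> dnorm d"
proof -
  have "diagm d (axis j 1) = d j *\<^sub>R axis j 1"
    by (simp add: diagm_def axis_def vec_eq_iff)
  then have "norm (diagm d (axis j 1)) = \<bar>d j\<bar>" by simp
  then show ?thesis using diagm_norm[of d "axis j 1"] by simp
qed

lemma single_norm:
  fixes w :: "real^'p::finite"
  assumes "\<And>j. j \<noteq> j0 \<Longrightarrow> w $ j = 0"
  shows "norm w = \<bar>w $ j0\<bar>"
proof -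
  have "w = (w $ j0) *\<^sub>R axis j0 1" using assms by (auto simp: vec_eq_iff axis_def)
  then show ?thesis by (metis norm_axis_1 norm_scaleR mult.right_neutral)
qed

lemma key_pointwise:
  fixes Hc :: "real^'p::finite \<Rightarrow> real" and th ths :: "real^'p"
  assumes ball: "ball ths r \<subseteq> Th"
    and xi: "\<forall>j. xi j > 0" and alpha: "\<forall>j. alpha j \<noteq> 0"
    and thin: "th \<in> closure Th"
    and mx: "\<forall>\<theta>\<in>closure Th. Hc \<theta> - (\<Sum>j\<in>UNIV. xi j * p (\<theta> $ j))
        \<le> Hc th - (\<Sum>j\<in>UNIV. xi j * p (th $ j))"
    and p0: "p 0 = 0"
    and pb: "\<forall>x. x \<noteq> 0 \<longrightarrow> \<bar>x\<bar> < \<delta> \<longrightarrow> lam / 2 * \<bar>x\<bar> powr q \<le> p x"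
    and lam: "lam > 0" and q: "q > 0" and m0: "m0 > 0"
    and n1: "norm (th - ths) < r" and n2: "norm (th - ths) < \<delta>"
    and n3: "norm (th - ths) < R * dnorm alpha powr (1 - eta)"
    and j0: "ths $ j0 = 0" "th $ j0 \<noteq> 0"
  shows "ennreal ((lam/2) powr m0) \<le> ennpow (cTR Hc Th ths alpha q eta R) m0
            * ennreal (G00norm ths alpha xi q powr (q*m0))"
proof -
  define tt where "tt = (\<chi> j. if j = j0 then 0 else th $ j)"
  define uh where "uh = (\<chi> j. (th $ j - ths $ j) / alpha j)"
  define ut where "ut = (\<chi> j. (tt $ j - ths $ j) / alpha j)"
  have dh: "diagm alpha uh = th - ths" using alpha by (simp add: diagm_def uh_def vec_eq_iff)
  have dt: "diagm alpha ut = tt - ths" using alpha by (simp add: diagm_def ut_def vec_eq_iff)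
  have ntt: "norm (tt - ths) \<le> norm (th - ths)"
    by (rule norm_le_componentwise_cart) (auto simp: tt_def j0)
  have ttin: "tt \<in> closure Th"
  proof -
    have "tt \<in> ball ths r" using ntt n1 by (simp add: dist_norm norm_minus_commute)
    then show ?thesis using ball closure_subset by blast
  qed
  define t where "t = th $ j0"
  have w: "uh - ut = (\<chi> j. if j = j0 then t / alpha j0 else 0)"
    by (simp add: uh_def ut_def tt_def t_def vec_eq_iff j0)
  have nw: "norm (uh - ut) = \<bar>t / alpha j0\<bar>"
    unfolding w by (subst single_norm[of j0]) auto
  have neq: "uh \<noteq> ut" using nw j0 alpha t_def by auto
  have inS: "(uh, ut) \<in> {(u, v). u \<noteq> v \<and> ths + diagm alpha u \<in> closure Th \<and> ths + diagm alpha v \<in> closure Th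
                 \<and> norm (diagm alpha u) < R * dnorm alpha powr (1 - eta)
                 \<and> norm (diagm alpha v) < R * dnorm alpha powr (1 - eta)}"
    using neq dh dt thin ttin n3 ntt by auto
  define rat where "rat = \<bar>Hc th - Hc tt\<bar> / norm (uh - ut) powr q"
  have cge: "ennreal rat \<le> cTR Hc Th ths alpha q eta R"
    unfolding cTR_def rat_def by (rule SUP_upper2[OF inS]) (simp add: dh dt)
  have sumeq: "(\<Sum>j\<in>UNIV. xi j * p (th $ j)) - (\<Sum>j\<in>UNIV. xi j * p (tt $ j)) = xi j0 * p t"
  proof -
    have "(\<Sum>j\<in>UNIV. xi j * p (th $ j)) - (\<Sum>j\<in>UNIV. xi j * p (tt $ j))
        = (\<Sum>j\<in>UNIV. xi j * p (th $ j) - xi j * p (tt $ j))" by (simp add: sum_subtractf)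
    also have "\<dots> = (\<Sum>j\<in>UNIV. if j = j0 then xi j0 * p t else 0)"
      by (rule sum.cong) (auto simp: tt_def t_def p0)
    finally show ?thesis by simp
  qed
  have "xi j0 * p t \<le> Hc th - Hc tt" using mx[rule_format, OF ttin] sumeq by linarith
  moreover have "\<bar>t\<bar> < \<delta>" using n2 component_le_norm_cart[of "th - ths" j0] j0 t_def by simp
  then have "lam / 2 * \<bar>t\<bar> powr q \<le> p t" using pb j0 t_def by auto
  ultimately have hge: "xi j0 * (lam / 2 * \<bar>t\<bar> powr q) \<le> \<bar>Hc th - Hc tt\<bar>"
    using xi by (smt (verit) mult_left_mono)
  have tpos: "\<bar>t\<bar> > 0" using j0 t_def by auto
  have apos: "\<bar>alpha j0\<bar> > 0" using alpha by auto
  have nwq: "norm (uh - ut) powr q = \<bar>t\<bar> powr q / \<bar>alpha j0\<bar> powr q"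
    by (simp add: nw abs_divide powr_divide)
  have ratge: "rat \<ge> lam / 2 * xi j0 * \<bar>alpha j0\<bar> powr q"
  proof -
    have "rat \<ge> xi j0 * (lam / 2 * \<bar>t\<bar> powr q) / (\<bar>t\<bar> powr q / \<bar>alpha j0\<bar> powr q)"
      unfolding rat_def nwq using hge tpos apos by (intro divide_right_mono) auto
    also have "xi j0 * (lam / 2 * \<bar>t\<bar> powr q) / (\<bar>t\<bar> powr q / \<bar>alpha j0\<bar> powr q)
       = lam / 2 * xi j0 * \<bar>alpha j0\<bar> powr q" using tpos apos by (simp add: field_simps)
    finally show ?thesis by simp
  qed
  define g where "g = G00norm ths alpha xi q"
  have gge: "\<bar>xi j0 powr (- 1 / q) / alpha j0\<bar> \<le> g"
    unfolding g_def G00norm_def using dnorm_ge[of "\<lambda>j. if ths $ j = 0 then xi j powr (- 1 / q) / alpha j else 0" j0]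
    by (simp add: j0)
  have xpos: "xi j0 > 0" using xi by auto
  have "\<bar>xi j0 powr (- 1 / q) / alpha j0\<bar> > 0" using xpos apos by simp
  then have gpos: "g > 0" using gge by linarith
  have gq: "g powr q \<ge> 1 / (xi j0 * \<bar>alpha j0\<bar> powr q)"
  proof -
    have "g powr q \<ge> \<bar>xi j0 powr (- 1 / q) / alpha j0\<bar> powr q"
      using gge q by (intro powr_mono2) auto
    also have "\<bar>xi j0 powr (- 1 / q) / alpha j0\<bar> powr q = 1 / (xi j0 * \<bar>alpha j0\<bar> powr q)"
    proof -
      have "\<bar>xi j0 powr (- 1 / q) / alpha j0\<bar> = xi j0 powr (- 1 / q) / \<bar>alpha j0\<bar>"
        by (simp add: abs_divide)
      then have "\<bar>xi j0 powr (- 1 / q) / alpha j0\<bar> powr q = (xi j0 powr (- 1 / q)) powr q / \<bar>alpha j0\<bar> powr q"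
        using xpos apos by (simp add: powr_divide)
      also have "(xi j0 powr (- 1 / q)) powr q = xi j0 powr (-1)" using q by (simp add: powr_powr)
      also have "xi j0 powr (-1) = 1 / xi j0" using xpos by (simp add: powr_minus divide_inverse)
      finally show ?thesis by simp
    qed
    finally show ?thesis .
  qed
  have "lam / 2 * xi j0 * \<bar>alpha j0\<bar> powr q > 0" using lam xpos apos by simp
  then have ratpos: "rat > 0" using ratge by linarith
  have prod: "rat * g powr q \<ge> lam / 2"
  proof -
    have "rat * g powr q \<ge> (lam / 2 * xi j0 * \<bar>alpha j0\<bar> powr q) * (1 / (xi j0 * \<bar>alpha j0\<bar> powr q))"
      using ratge gq ratpos lam xpos apos by (intro mult_mono) auto
    then show ?thesis using xpos apos by simp
  qed
  show ?thesis
  proof (cases "cTR Hc Th ths alpha q eta R = \<infinity>")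
    case True
    then show ?thesis using gpos by (simp add: ennpow_def g_def[symmetric] ennreal_mult_top)
  next
    case False
    define c where "c = enn2real (cTR Hc Th ths alpha q eta R)"
    have cc: "cTR Hc Th ths alpha q eta R = ennreal c" "c \<ge> 0" using False by (auto simp: c_def ennreal_enn2real_if)
    have "rat \<le> c" using cge cc ratpos by simp
    then have "rat * g powr q \<le> c * g powr q" by (intro mult_right_mono) auto
    then have cg: "c * g powr q \<ge> lam / 2" using prod by linarith
    have "(lam/2) powr m0 \<le> (c * g powr q) powr m0" using cg lam m0 by (intro powr_mono2) auto
    also have "\<dots> = c powr m0 * g powr (q * m0)" using cc gpos by (simp add: powr_mult powr_powr)
    finally show ?thesis using cc gpos
      by (simp add: ennpow_def g_def[symmetric] ennreal_mult[symmetric])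
  qed
qed

lemma bad_bound:
  fixes a n d0 R e0 eta m :: real
  assumes a: "a > 0" "a \<le> 1" and n: "n \<ge> 0" and d: "d0 \<le> a * n"
    and dm: "d0 \<ge> min e0 (R * a powr (1 - eta))"
    and eta: "0 < eta" "eta \<le> 1" and m: "m > 0" and R: "R > 0" and e0: "e0 > 0"
  shows "1 \<le> ((1/R) powr m + (1/e0) powr m) * a powr (m * eta) * n powr m"
proof -
  have t1: "(1/R) powr m * a powr (m * eta) * n powr m \<ge> 0" by simp
  have t2: "(1/e0) powr m * a powr (m * eta) * n powr m \<ge> 0" by simp
  have eq: "((1/R) powr m + (1/e0) powr m) * a powr (m * eta) * n powr m
     = (1/R) powr m * a powr (m * eta) * n powr m + (1/e0) powr m * a powr (m * eta) * n powr m"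
    by (simp add: algebra_simps)
  show ?thesis
  proof (cases "e0 \<le> d0")
    case True
    then have "e0 \<le> a * n" using d by linarith
    then have "e0 powr m \<le> (a * n) powr m" using e0 m by (intro powr_mono2) auto
    also have "\<dots> = a powr m * n powr m" using a n by (simp add: powr_mult)
    also have "a powr m \<le> a powr (m * eta)" using a eta m
      by (intro powr_mono') (auto simp: mult_left_le)
    then have "a powr m * n powr m \<le> a powr (m * eta) * n powr m" by (intro mult_right_mono) auto
    finally have "1 \<le> (1/e0) powr m * a powr (m * eta) * n powr m" using e0
      by (simp add: powr_divide field_simps)
    then show ?thesis using eq t1 by linarith
  next
    case False
    then have "R * a powr (1 - eta) \<le> a * n" using d dm by linarith
    moreover have "a powr (1 - eta) = a / a powr eta" using a by (simp add: powr_diff)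
    ultimately have "R * a / a powr eta \<le> a * n" by simp
    then have "R * a \<le> a * n * a powr eta" using a by (simp add: divide_le_eq)
    then have "R \<le> n * a powr eta" using a by (simp add: algebra_simps)
    then have "R powr m \<le> (n * a powr eta) powr m" using R m by (intro powr_mono2) auto
    also have "\<dots> = a powr (m * eta) * n powr m" using a n
      by (simp add: powr_mult powr_powr algebra_simps)
    finally have "1 \<le> (1/R) powr m * a powr (m * eta) * n powr m" using R
      by (simp add: powr_divide field_simps)
    then show ?thesis using eq t2 by linarith
  qed
qed

theorem theorem5:
  fixes M :: "'w measure"
    and Th :: "(real^'p::finite) set" and ths :: "real^'p"
    and TT :: "real set"
    and H :: "real \<Rightarrow> 'w \<Rightarrow> real^'p \<Rightarrow> real"
    and xi :: "real \<Rightarrow> 'w \<Rightarrow> 'p \<Rightarrow> real"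
    and p :: "real \<Rightarrow> real"
    and thetahat :: "real \<Rightarrow> 'w \<Rightarrow> real^'p"
    and alpha :: "real \<Rightarrow> 'p \<Rightarrow> real"
    and q eta m :: real
  assumes M: "prob_space M"
    and Th: "open Th" "bounded Th" "ths \<in> Th"
    and TT: "TT \<subseteq> {0..}" "\<forall>x. \<exists>T\<in>TT. T > x"
    and H_meas: "\<forall>T\<in>TT. \<forall>\<theta>\<in>closure Th. (\<lambda>\<omega>. H T \<omega> \<theta>) \<in> borel_measurable M"
    and H_cont: "\<forall>T\<in>TT. \<forall>\<omega>\<in>space M. continuous_on (closure Th) (H T \<omega>)"
    and xi_meas: "\<forall>T\<in>TT. \<forall>j. (\<lambda>\<omega>. xi T \<omega> j) \<in> borel_measurable M"
    and xi_pos: "\<forall>T\<in>TT. \<forall>\<omega>\<in>space M. \<forall>j. xi T \<omega> j > 0"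
    and p_nonneg: "\<forall>x. p x \<ge> 0" and p0: "p 0 = 0"
    and th_meas: "\<forall>T\<in>TT. thetahat T \<in> borel_measurable M"
    and th_in: "\<forall>T\<in>TT. \<forall>\<omega>\<in>space M. thetahat T \<omega> \<in> closure Th"
    and th_max: "\<forall>T\<in>TT. \<forall>\<omega>\<in>space M. \<forall>\<theta>\<in>closure Th.
        H T \<omega> \<theta> - (\<Sum>j\<in>UNIV. xi T \<omega> j * p (\<theta> $ j))
        \<le> H T \<omega> (thetahat T \<omega>) - (\<Sum>j\<in>UNIV. xi T \<omega> j * p (thetahat T \<omega> $ j))"
    and alpha_inv: "\<forall>T\<in>TT. \<forall>j. alpha T j \<noteq> 0"
    and alpha_lim: "\<forall>\<epsilon>>0. \<exists>T0. \<forall>T\<in>TT. T \<ge> T0 \<longrightarrow> dnorm (alpha T) < \<epsilon>"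
    and q: "0 < q" "q \<le> 1"
    and eta: "0 < eta" "eta \<le> 1"
    and m: "m > 0"
    and moment: "(SUP T\<in>TT. \<integral>\<^sup>+ \<omega>. ennreal (norm (\<chi> j. (thetahat T \<omega> $ j - ths $ j) / alpha T j) powr m) \<partial>M) < \<infinity>"
    and A5: "\<exists>lam>0. ((\<lambda>x. p x / \<bar>x\<bar> powr q) \<longlongrightarrow> lam) (at 0)"
  shows "\<forall>R>0. \<forall>m0>0. \<exists>D>0. \<forall>T\<in>TT.
     ennreal (measure M {\<omega>\<in>space M. \<exists>j. ths $ j = 0 \<and> thetahat T \<omega> $ j \<noteq> 0})
       < ennreal D * (ennreal (dnorm (alpha T) powr (m * eta))
                      + cT M (H T) Th ths (alpha T) (xi T) q eta m0 R)"
proof (intro allI impI)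
  fix R m0 :: real
  assume R: "R > 0" and m0: "m0 > 0"
  interpret prob_space M by (rule M)
  obtain lam where lam: "lam > 0" and lim: "((\<lambda>x. p x / \<bar>x\<bar> powr q) \<longlongrightarrow> lam) (at 0)"
    using A5 by blast
  have "eventually (\<lambda>x. lam / 2 < p x / \<bar>x\<bar> powr q) (at 0)"
    using order_tendstoD(1)[OF lim, of "lam / 2"] lam by linarith
  then obtain \<delta> where dpos: "\<delta> > 0"
    and dprop: "\<And>x. x \<noteq> 0 \<Longrightarrow> dist x 0 < \<delta> \<Longrightarrow> lam / 2 < p x / \<bar>x\<bar> powr q"
    unfolding eventually_at by blast
  have pb: "\<forall>x. x \<noteq> 0 \<longrightarrow> \<bar>x\<bar> < \<delta> \<longrightarrow> lam / 2 * \<bar>x\<bar> powr q \<le> p x"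
  proof (intro allI impI)
    fix x :: real assume "x \<noteq> 0" "\<bar>x\<bar> < \<delta>"
    then have "lam / 2 < p x / \<bar>x\<bar> powr q" using dprop by simp
    moreover have "\<bar>x\<bar> powr q > 0" using \<open>x \<noteq> 0\<close> by simp
    ultimately show "lam / 2 * \<bar>x\<bar> powr q \<le> p x" by (simp add: pos_less_divide_eq)
  qed
  obtain r where rpos: "r > 0" and ball: "ball ths r \<subseteq> Th"
    using Th open_contains_ball by blast
  define e0 where "e0 = min r \<delta>"
  have e0pos: "e0 > 0" using rpos dpos by (simp add: e0_def)
  define SS where "SS = (SUP T\<in>TT. \<integral>\<^sup>+ \<omega>. ennreal (norm (\<chi> j. (thetahat T \<omega> $ j - ths $ j) / alpha T j) powr m) \<partial>M)"
  define S where "S = enn2real SS"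
  have S0: "S \<ge> 0" by (simp add: S_def)
  have mom: "\<And>T. T \<in> TT \<Longrightarrow> (\<integral>\<^sup>+ \<omega>. ennreal (norm (\<chi> j. (thetahat T \<omega> $ j - ths $ j) / alpha T j) powr m) \<partial>M) \<le> ennreal S"
  proof -
    fix T assume "T \<in> TT"
    then have "(\<integral>\<^sup>+ \<omega>. ennreal (norm (\<chi> j. (thetahat T \<omega> $ j - ths $ j) / alpha T j) powr m) \<partial>M) \<le> SS"
      unfolding SS_def by (rule SUP_upper)
    also have "SS = ennreal S" using moment unfolding S_def SS_def[symmetric]
      by (simp add: ennreal_enn2real_if del: Sup_eq_top_iff SUP_eq_top_iff)
    finally show "?thesis T" .
  qed
  define l where "l = (lam / 2) powr m0"
  have lpos: "l > 0" using lam by (simp add: l_def)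
  define C where "C = (1/R) powr m + (1/e0) powr m"
  have Cpos: "C > 0" using R e0pos by (simp add: C_def add_pos_pos)
  define D where "D = 1 + 1 / l + S * C"
  have Dg: "D \<ge> 1 + 1 / l" "D \<ge> 1 + S * C" using S0 Cpos lpos by (auto simp: D_def)
  have Dpos: "D > 0" using Dg lpos by (smt (verit) divide_pos_pos)
  show "\<exists>D>0. \<forall>T\<in>TT.
     ennreal (measure M {\<omega>\<in>space M. \<exists>j. ths $ j = 0 \<and> thetahat T \<omega> $ j \<noteq> 0})
       < ennreal D * (ennreal (dnorm (alpha T) powr (m * eta))
                      + cT M (H T) Th ths (alpha T) (xi T) q eta m0 R)"
  proof (intro exI[of _ D] conjI ballI Dpos)
    fix T assume T: "T \<in> TT"
    define a where "a = dnorm (alpha T)"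
    have apos: "a > 0"
    proof -
      have "\<bar>alpha T undefined\<bar> > 0" using alpha_inv T by auto
      then show ?thesis using dnorm_ge[of "alpha T" undefined] unfolding a_def by linarith
    qed
    define x0 where "x0 = a powr (m * eta)"
    have x0pos: "x0 > 0" using apos by (simp add: x0_def)
    define E where "E = {\<omega>\<in>space M. \<exists>j. ths $ j = 0 \<and> thetahat T \<omega> $ j \<noteq> 0}"
    show "ennreal (measure M {\<omega>\<in>space M. \<exists>j. ths $ j = 0 \<and> thetahat T \<omega> $ j \<noteq> 0})
       < ennreal D * (ennreal (dnorm (alpha T) powr (m * eta))
                      + cT M (H T) Th ths (alpha T) (xi T) q eta m0 R)"
    proof (cases "cT M (H T) Th ths (alpha T) (xi T) q eta m0 R = \<infinity>")
      case True
      then show ?thesis using Dpos by (simp add: ennreal_mult_top)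
    next
      case False
      define y where "y = enn2real (cT M (H T) Th ths (alpha T) (xi T) q eta m0 R)"
      have yy: "cT M (H T) Th ths (alpha T) (xi T) q eta m0 R = ennreal y" "y \<ge> 0"
        using False by (auto simp: y_def ennreal_enn2real_if)
      have mainreal: "measure M E < D * (x0 + y)"
      proof (cases "E \<in> sets M")
        case False
        then show ?thesis using Dpos x0pos yy by (simp add: measure_notin_sets)
      next
        case Emeas: True
        have thmeas[measurable]: "thetahat T \<in> borel_measurable M" using th_meas T by blast
        define eps where "eps = min e0 (R * a powr (1 - eta))"
        define G where "G = {\<omega>\<in>space M. norm (thetahat T \<omega> - ths) < eps}"
        have Gm: "G \<in> sets M" unfolding G_def by measurable
        define B where "B = space M - G"
        have Bm: "B \<in> sets M" using Gm by (auto simp: B_def)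
        have EG: "E \<inter> G \<in> sets M" using Emeas Gm by auto
        have splitE: "measure M E \<le> measure M (E \<inter> G) + measure M B"
        proof -
          have "E \<subseteq> (E \<inter> G) \<union> B" by (auto simp: E_def B_def)
          then have "measure M E \<le> measure M ((E \<inter> G) \<union> B)" using EG Bm by (intro finite_measure_mono) auto
          also have "\<dots> \<le> measure M (E \<inter> G) + measure M B" by (rule measure_Un_le[OF EG Bm])
          finally show ?thesis .
        qed
        have partG: "l * measure M (E \<inter> G) \<le> y"
        proof -
          have pw: "\<forall>\<omega>\<in>space M. ennreal l * indicator (E \<inter> G) \<omega> \<le> ennpow (cTR (H T \<omega>) Th ths (alpha T) q eta R) m0
               * ennreal (G00norm ths (alpha T) (xi T \<omega>) q powr (q * m0))"
          proof
            fix \<omega> assume \<omega>: "\<omega> \<in> space M"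
            show "ennreal l * indicator (E \<inter> G) \<omega> \<le> ennpow (cTR (H T \<omega>) Th ths (alpha T) q eta R) m0
               * ennreal (G00norm ths (alpha T) (xi T \<omega>) q powr (q * m0))"
            proof (cases "\<omega> \<in> E \<inter> G")
              case False then show ?thesis by simp
            next
              case True
              then obtain j0 where j0: "ths $ j0 = 0" "thetahat T \<omega> $ j0 \<noteq> 0" by (auto simp: E_def)
              have ng: "norm (thetahat T \<omega> - ths) < eps" using True by (auto simp: G_def)
              have mx: "\<forall>\<theta>\<in>closure Th. H T \<omega> \<theta> - (\<Sum>j\<in>UNIV. xi T \<omega> j * p (\<theta> $ j))
                  \<le> H T \<omega> (thetahat T \<omega>) - (\<Sum>j\<in>UNIV. xi T \<omega> j * p (thetahat T \<omega> $ j))"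
                using th_max T \<omega> by blast
              have xi': "\<forall>j. xi T \<omega> j > 0" using xi_pos T \<omega> by blast
              have al': "\<forall>j. alpha T j \<noteq> 0" using alpha_inv T by blast
              have thin: "thetahat T \<omega> \<in> closure Th" using th_in T \<omega> by blast
              have n1: "norm (thetahat T \<omega> - ths) < r" "norm (thetahat T \<omega> - ths) < \<delta>"
                "norm (thetahat T \<omega> - ths) < R * dnorm (alpha T) powr (1 - eta)"
                using ng by (auto simp: eps_def e0_def a_def)
              have "ennreal l \<le> ennpow (cTR (H T \<omega>) Th ths (alpha T) q eta R) m0
               * ennreal (G00norm ths (alpha T) (xi T \<omega>) q powr (q * m0))"
                unfolding l_def
                by (rule key_pointwise[OF ball xi' al' thin mx p0 pb lam q(1) m0 n1 j0])
              then show ?thesis using True by simp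
            qed
          qed
          have "ennreal l * emeasure M (E \<inter> G) = (\<integral>\<^sup>+\<omega>. ennreal l * indicator (E \<inter> G) \<omega> \<partial>M)"
            by (rule nn_integral_cmult_indicator[symmetric, OF EG])
          also have "\<dots> \<le> cT M (H T) Th ths (alpha T) (xi T) q eta m0 R"
            unfolding cT_def by (rule nn_integral_mono) (use pw in auto)
          finally have "ennreal (l * measure M (E \<inter> G)) \<le> ennreal y" using yy lpos
            by (simp add: emeasure_eq_measure ennreal_mult)
          then show ?thesis using yy by (simp add: ennreal_le_iff)
        qed
        have mEG: "measure M (E \<inter> G) \<le> y / l" using partG lpos by (simp add: pos_le_divide_eq mult.commute)
        show ?thesis
        proof (cases "a \<le> 1")
          case False
          have "x0 \<ge> 1" unfolding x0_def using False m eta by (intro ge_one_powr_ge_zero) auto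
          then have "D * x0 \<ge> D * 1" using Dpos by (intro mult_left_mono) auto
          moreover have "D * y \<ge> 0" using Dpos yy by simp
          moreover have "D > 1" using Dg lpos by (smt (verit) divide_pos_pos)
          moreover have "measure M E \<le> 1" by simp
          ultimately have "measure M E < D * x0 + D * y" by linarith
          then show ?thesis by (simp add: distrib_left)
        next
          case aleq: True
          have Cx0: "C * x0 > 0" using Cpos x0pos by simp
          have partB: "(1 / (C * x0)) * measure M B \<le> S"
          proof -
            have pw: "\<forall>\<omega>\<in>space M. ennreal (1 / (C * x0)) * indicator B \<omega>
                \<le> ennreal (norm (\<chi> j. (thetahat T \<omega> $ j - ths $ j) / alpha T j) powr m)"
            proof
              fix \<omega> assume \<omega>: "\<omega> \<in> space M"
              show "ennreal (1 / (C * x0)) * indicator B \<omega>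
                \<le> ennreal (norm (\<chi> j. (thetahat T \<omega> $ j - ths $ j) / alpha T j) powr m)"
              proof (cases "\<omega> \<in> B")
                case False then show ?thesis by simp
              next
                case True
                define uh where "uh = (\<chi> j. (thetahat T \<omega> $ j - ths $ j) / alpha T j)"
                have "thetahat T \<omega> - ths = diagm (alpha T) uh"
                  using alpha_inv T by (simp add: diagm_def uh_def vec_eq_iff)
                then have d: "norm (thetahat T \<omega> - ths) \<le> a * norm uh"
                  using diagm_norm[of "alpha T" uh] by (simp add: a_def)
                have dm: "norm (thetahat T \<omega> - ths) \<ge> min e0 (R * a powr (1 - eta))"
                  using True \<omega> by (auto simp: B_def G_def eps_def)
                have "1 \<le> C * x0 * norm uh powr m"
                  unfolding C_def x0_def
                  by (rule bad_bound[OF apos aleq norm_ge_zero d dm eta m R e0pos])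
                then have "1 / (C * x0) \<le> norm uh powr m" using Cx0
                  by (simp add: divide_le_eq mult.commute)
                then show ?thesis using True by (simp add: uh_def)
              qed
            qed
            have "ennreal (1 / (C * x0)) * emeasure M B = (\<integral>\<^sup>+\<omega>. ennreal (1 / (C * x0)) * indicator B \<omega> \<partial>M)"
              by (rule nn_integral_cmult_indicator[symmetric, OF Bm])
            also have "\<dots> \<le> (\<integral>\<^sup>+ \<omega>. ennreal (norm (\<chi> j. (thetahat T \<omega> $ j - ths $ j) / alpha T j) powr m) \<partial>M)"
              by (rule nn_integral_mono) (use pw in auto)
            also have "\<dots> \<le> ennreal S" by (rule mom[OF T])
            finally have "ennreal (1 / (C * x0)) * ennreal (measure M B) \<le> ennreal S"
              by (simp add: emeasure_eq_measure)
            moreover have "ennreal (1 / (C * x0)) * ennreal (measure M B) = ennreal ((1 / (C * x0)) * measure M B)"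
              using Cx0 by (intro ennreal_mult[symmetric]) auto
            ultimately have "ennreal ((1 / (C * x0)) * measure M B) \<le> ennreal S" by simp
            then show ?thesis using S0 by (simp add: ennreal_le_iff)
          qed
          have mBe: "measure M B = (C * x0) * ((1 / (C * x0)) * measure M B)" using Cpos x0pos by simp
          have "(C * x0) * ((1 / (C * x0)) * measure M B) \<le> (C * x0) * S"
            using partB Cx0 by (intro mult_left_mono) auto
          then have mB: "measure M B \<le> S * C * x0" using mBe by (simp add: mult_ac)
          have "D * x0 \<ge> (1 + S * C) * x0" using Dg x0pos by (intro mult_right_mono) auto
          moreover have "D * y \<ge> (1 / l) * y" using Dg yy lpos by (intro mult_right_mono) auto
          moreover have "D * (x0 + y) = D * x0 + D * y" by (simp add: distrib_left)
          moreover have "(1 + S * C) * x0 = x0 + S * C * x0" by (simp add: distrib_right)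
          moreover have "(1 / l) * y = y / l" by simp
          ultimately have "D * (x0 + y) \<ge> x0 + S * C * x0 + y / l" by linarith
          then show ?thesis using splitE mEG mB x0pos by linarith
        qed
      qed
      have "ennreal (measure M E) < ennreal (D * (x0 + y))"
        using mainreal by (simp add: ennreal_less_iff)
      moreover have "ennreal (D * (x0 + y)) = ennreal D * (ennreal x0 + ennreal y)"
        using yy Dpos x0pos by (simp add: ennreal_mult ennreal_plus)
      ultimately show ?thesis using yy by (simp add: E_def x0_def a_def)
    qed
  qed
qed

end
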